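(* Let $$\tau_1(x)=\begin{cases}\tfrac43x,&0\le x<\tfrac38,\\ 4x-1,&\tfrac38\le x<\tfrac12,\\ -4x+3,&\tfrac12\le x<\tfrac58,\\ -\tfrac43x+\tfrac43,&\tfrac58\le x\le1,\end{cases}\qquad \tau_2(x)=\begin{cases}3x,&0\le x<\tfrac16,\\ \tfrac32x+\tfrac14,&\tfrac16\le x<\tfrac12,\\ -\tfrac32x+\tfrac74,&\tfrac12\le x<\tfrac56,\\ -3x+3,&\tfrac56\le x\le1.\end{cases}$$ Then $\tau_1$ preserves the density $f_1=\frac32\chi_{[0,1/2]}+\frac12\chi_{[1/2,1]}$, $\tau_2$ preserves $f_2=\frac23\chi_{[0,1/2]}+\frac43\chi_{[1/2,1]}$, and $1=\frac25f_1+\frac35f_2$. Nevertheless, there is no Borel measurable map $\eta:[0,1]\to[0,1]$ with $\eta(x)\in\{\tau_1(x),\tau_2(x)\}$ for every $x$ that preserves Lebesgue measure. On the other hand, the map $$\tau(x)=\begin{cases}\tau_2(x),&0\le x<\tfrac12,\\ -3x+\tfrac52,&\tfrac12\le x<\tfrac23,\\ -\tfrac32x+\tfrac32,&\tfrac23\le x\le1\end{cases}$$ satisfies $\tau_1\le\tau\le\tau_2$ and preserves Lebesgue measure.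
   Context: A probability density $f$ is preserved by $\tau$ if $\int_{\tau^{-1}(A)}f\,dx=\int_A f\,dx$ for every Borel $A\subseteq[0,1]$; preserving Lebesgue measure means preserving the density $1$. *)

theory Defs
  imports "HOL-Analysis.Analysis"
begin

definition preserves_density :: "(real \<Rightarrow> real) \<Rightarrow> (real \<Rightarrow> real) \<Rightarrow> bool" where
  "preserves_density t f \<longleftrightarrow>
     (\<forall>A \<in> sets borel. A \<subseteq> {0..1} \<longrightarrow>
        (\<integral>\<^sup>+ x \<in> (t -` A \<inter> {0..1}). ennreal (f x) \<partial>lborel)
        = (\<integral>\<^sup>+ x \<in> A. ennreal (f x) \<partial>lborel))"

definition tau1 :: "real \<Rightarrow> real" where
  "tau1 x = (if x < 3/8 then 4/3 * x
             else if x < 1/2 then 4 * x - 1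
             else if x < 5/8 then -4 * x + 3
             else -4/3 * x + 4/3)"

definition tau2 :: "real \<Rightarrow> real" where
  "tau2 x = (if x < 1/6 then 3 * x
             else if x < 1/2 then 3/2 * x + 1/4
             else if x < 5/6 then -3/2 * x + 7/4
             else -3 * x + 3)"

definition tau :: "real \<Rightarrow> real" where
  "tau x = (if x < 1/2 then tau2 x
            else if x < 2/3 then -3 * x + 5/2
            else -3/2 * x + 3/2)"

definition f1 :: "real \<Rightarrow> real" where
  "f1 x = 3/2 * indicator {0..1/2} x + 1/2 * indicator {1/2..1} x"

definition f2 :: "real \<Rightarrow> real" where
  "f2 x = 2/3 * indicator {0..1/2} x + 4/3 * indicator {1/2..1} x"

end

theory Submission
  imports Defs
begin


lemma subst_aff:
  fixes m q :: real and F G :: "real \<Rightarrow> ennreal"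
  assumes [measurable]: "F \<in> borel_measurable borel" "G \<in> borel_measurable borel" and m: "m \<noteq> 0"
  shows "(\<integral>\<^sup>+x. F x * G (m*x+q) \<partial>lborel) = ennreal (1/\<bar>m\<bar>) * (\<integral>\<^sup>+y. F ((y-q)/m) * G y \<partial>lborel)"
proof -
  have "(\<integral>\<^sup>+x. F x * G (m*x+q) \<partial>lborel) = \<bar>1/m\<bar> * (\<integral>\<^sup>+y. F (-q/m + 1/m * y) * G (m*(-q/m + 1/m*y)+q) \<partial>lborel)"
    by (rule nn_integral_real_affine) (use m in auto)
  also have "(\<lambda>y. F (-q/m + 1/m * y) * G (m*(-q/m + 1/m*y)+q)) = (\<lambda>y. F ((y-q)/m) * G y)"
    using m by (auto simp: field_simps)
  finally show ?thesis by simp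
qed

lemma branch:
  fixes m q c a b lo hi :: real
  assumes [measurable]: "A \<in> sets borel" and m: "m \<noteq> 0" and c: "c \<ge> 0"
    and img: "\<And>y. ((y-q)/m \<in> {a..b}) = (y \<in> {lo..hi})"
  shows "(\<integral>\<^sup>+x. ennreal (c * indicator {a..b} x * indicator A (m*x+q)) \<partial>lborel)
       = (\<integral>\<^sup>+y. ennreal (c/\<bar>m\<bar> * indicator {lo..hi} y * indicator A y) \<partial>lborel)"
proof -
  have "(\<integral>\<^sup>+x. ennreal (c * indicator {a..b} x * indicator A (m*x+q)) \<partial>lborel)
     = (\<integral>\<^sup>+x. ennreal (c * indicator {a..b} x) * indicator A (m*x+q) \<partial>lborel)"
    by (intro nn_integral_cong) (auto simp: indicator_def)
  also have "\<dots> = ennreal (1/\<bar>m\<bar>) * (\<integral>\<^sup>+y. ennreal (c * indicator {a..b} ((y-q)/m)) * indicator A y \<partial>lborel)"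
    by (rule subst_aff) (use m in auto)
  also have "\<dots> = (\<integral>\<^sup>+y. ennreal (1/\<bar>m\<bar>) * (ennreal (c * indicator {a..b} ((y-q)/m)) * indicator A y) \<partial>lborel)"
    by (rule nn_integral_cmult[symmetric]) auto
  also have "\<dots> = (\<integral>\<^sup>+y. ennreal (c/\<bar>m\<bar> * indicator {lo..hi} y * indicator A y) \<partial>lborel)"
  proof (intro nn_integral_cong)
    fix y
    show "ennreal (1/\<bar>m\<bar>) * (ennreal (c * indicator {a..b} ((y-q)/m)) * indicator A y)
        = ennreal (c/\<bar>m\<bar> * indicator {lo..hi} y * indicator A y)"
      using img[of y] c by (auto simp: indicator_def ennreal_mult[symmetric])
  qed
  finally show ?thesis .
qed

lemma nn4:
  fixes g1 g2 g3 g4 :: "real \<Rightarrow> real"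
  assumes [measurable]: "g1 \<in> borel_measurable borel" "g2 \<in> borel_measurable borel"
     "g3 \<in> borel_measurable borel" "g4 \<in> borel_measurable borel"
  and nn: "\<And>x. g1 x \<ge> 0" "\<And>x. g2 x \<ge> 0" "\<And>x. g3 x \<ge> 0" "\<And>x. g4 x \<ge> 0"
  shows "(\<integral>\<^sup>+x. ennreal (g1 x + g2 x + g3 x + g4 x) \<partial>lborel)
    = (\<integral>\<^sup>+x. ennreal (g1 x) \<partial>lborel) + (\<integral>\<^sup>+x. ennreal (g2 x) \<partial>lborel)
      + (\<integral>\<^sup>+x. ennreal (g3 x) \<partial>lborel) + (\<integral>\<^sup>+x. ennreal (g4 x) \<partial>lborel)"
proof -
  have "(\<integral>\<^sup>+x. ennreal (g1 x + g2 x + g3 x + g4 x) \<partial>lborel)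
     = (\<integral>\<^sup>+x. ennreal (g1 x) + ennreal (g2 x) + ennreal (g3 x) + ennreal (g4 x) \<partial>lborel)"
    using nn by (intro nn_integral_cong) (simp add: ennreal_plus)
  also have "\<dots> = (\<integral>\<^sup>+x. ennreal (g1 x) \<partial>lborel) + (\<integral>\<^sup>+x. ennreal (g2 x) \<partial>lborel)
      + (\<integral>\<^sup>+x. ennreal (g3 x) \<partial>lborel) + (\<integral>\<^sup>+x. ennreal (g4 x) \<partial>lborel)"
    by (simp add: nn_integral_add)
  finally show ?thesis .
qed

lemma AE3: "AE x in lborel. x \<noteq> (a::real) \<and> x \<noteq> b \<and> x \<noteq> c"
  using AE_lborel_singleton[of a] AE_lborel_singleton[of b] AE_lborel_singleton[of c]
  by eventually_elim auto

lemma pres_tau1: "preserves_density tau1 f1"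
  unfolding preserves_density_def
proof (intro ballI impI)
  fix A :: "real set" assume A[measurable]: "A \<in> sets borel" and sub: "A \<subseteq> {0..1}"
  have "(\<integral>\<^sup>+x\<in>(tau1 -` A \<inter> {0..1}). ennreal (f1 x) \<partial>lborel)
     = (\<integral>\<^sup>+x. ennreal (3/2 * indicator {0..3/8} x * indicator A ((4/3)*x+0)
        + 3/2 * indicator {3/8..1/2} x * indicator A (4*x+(-1))
        + 1/2 * indicator {1/2..5/8} x * indicator A ((-4)*x+3)
        + 1/2 * indicator {5/8..1} x * indicator A ((-4/3)*x+4/3)) \<partial>lborel)"
  proof (intro nn_integral_cong_AE)
    show "AE x in lborel. ennreal (f1 x) * indicator (tau1 -` A \<inter> {0..1}) x = ennreal (3/2 * indicator {0..3/8} x * indicator A ((4/3)*x+0)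
        + 3/2 * indicator {3/8..1/2} x * indicator A (4*x+(-1))
        + 1/2 * indicator {1/2..5/8} x * indicator A ((-4)*x+3)
        + 1/2 * indicator {5/8..1} x * indicator A ((-4/3)*x+4/3))"
      using AE3[of "3/8" "1/2" "5/8"]
    proof eventually_elim
      case (elim x)
      have "x < 0 \<or> (0 \<le> x \<and> x < 3/8) \<or> (3/8 < x \<and> x < 1/2) \<or> (1/2 < x \<and> x < 5/8) \<or> (5/8 < x \<and> x \<le> 1) \<or> 1 < x"
        using elim by linarith
      then show ?case by (elim disjE) (simp_all add: f1_def tau1_def indicator_def)
    qed
  qed
  also have "\<dots> = (\<integral>\<^sup>+x. ennreal (3/2 * indicator {0..3/8} x * indicator A ((4/3)*x+0)) \<partial>lborel) + (\<integral>\<^sup>+x. ennreal (3/2 * indicator {3/8..1/2} x * indicator A (4*x+(-1))) \<partial>lborel) + (\<integral>\<^sup>+x. ennreal (1/2 * indicator {1/2..5/8} x * indicator A ((-4)*x+3)) \<partial>lborel) + (\<integral>\<^sup>+x. ennreal (1/2 * indicator {5/8..1} x * indicator A ((-4/3)*x+4/3)) \<partial>lborel)"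
    by (rule nn4) auto
  also have "\<dots> = (\<integral>\<^sup>+x. ennreal (3/2/\<bar>(4/3)\<bar> * indicator {0..1/2} x * indicator A x) \<partial>lborel) + (\<integral>\<^sup>+x. ennreal (3/2/\<bar>4\<bar> * indicator {1/2..1} x * indicator A x) \<partial>lborel) + (\<integral>\<^sup>+x. ennreal (1/2/\<bar>(-4)\<bar> * indicator {1/2..1} x * indicator A x) \<partial>lborel) + (\<integral>\<^sup>+x. ennreal (1/2/\<bar>(-4/3)\<bar> * indicator {0..1/2} x * indicator A x) \<partial>lborel)"
  proof -
    have b0: "(\<integral>\<^sup>+x. ennreal (3/2 * indicator {0..3/8} x * indicator A ((4/3)*x+0)) \<partial>lborel) = (\<integral>\<^sup>+x. ennreal (3/2/\<bar>(4/3)\<bar> * indicator {0..1/2} x * indicator A x) \<partial>lborel)"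
      by (rule branch[OF A]) (auto simp: field_simps)
    have b1: "(\<integral>\<^sup>+x. ennreal (3/2 * indicator {3/8..1/2} x * indicator A (4*x+(-1))) \<partial>lborel) = (\<integral>\<^sup>+x. ennreal (3/2/\<bar>4\<bar> * indicator {1/2..1} x * indicator A x) \<partial>lborel)"
      by (rule branch[OF A]) (auto simp: field_simps)
    have b2: "(\<integral>\<^sup>+x. ennreal (1/2 * indicator {1/2..5/8} x * indicator A ((-4)*x+3)) \<partial>lborel) = (\<integral>\<^sup>+x. ennreal (1/2/\<bar>(-4)\<bar> * indicator {1/2..1} x * indicator A x) \<partial>lborel)"
      by (rule branch[OF A]) (auto simp: field_simps)
    have b3: "(\<integral>\<^sup>+x. ennreal (1/2 * indicator {5/8..1} x * indicator A ((-4/3)*x+4/3)) \<partial>lborel) = (\<integral>\<^sup>+x. ennreal (1/2/\<bar>(-4/3)\<bar> * indicator {0..1/2} x * indicator A x) \<partial>lborel)"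
      by (rule branch[OF A]) (auto simp: field_simps)
    show ?thesis by (simp only: b0 b1 b2 b3)
  qed
  also have "\<dots> = (\<integral>\<^sup>+x. ennreal (3/2/\<bar>(4/3)\<bar> * indicator {0..1/2} x * indicator A x
        + 3/2/\<bar>4\<bar> * indicator {1/2..1} x * indicator A x
        + 1/2/\<bar>(-4)\<bar> * indicator {1/2..1} x * indicator A x
        + 1/2/\<bar>(-4/3)\<bar> * indicator {0..1/2} x * indicator A x) \<partial>lborel)"
    by (rule nn4[symmetric]) auto
  also have "\<dots> = (\<integral>\<^sup>+x\<in>A. ennreal (f1 x) \<partial>lborel)"
  proof (intro nn_integral_cong_AE)
    show "AE x in lborel. ennreal (3/2/\<bar>(4/3)\<bar> * indicator {0..1/2} x * indicator A x
        + 3/2/\<bar>4\<bar> * indicator {1/2..1} x * indicator A x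
        + 1/2/\<bar>(-4)\<bar> * indicator {1/2..1} x * indicator A x
        + 1/2/\<bar>(-4/3)\<bar> * indicator {0..1/2} x * indicator A x) = ennreal (f1 x) * indicator A x"
      using AE3[of "1/2" "1/2" "1/2"]
    proof eventually_elim
      case (elim x)
      then show ?case using sub by (auto simp: indicator_def f1_def tau1_def)
    qed
  qed
  finally show "(\<integral>\<^sup>+x\<in>(tau1 -` A \<inter> {0..1}). ennreal (f1 x) \<partial>lborel) = (\<integral>\<^sup>+x\<in>A. ennreal (f1 x) \<partial>lborel)" .
qed

lemma pres_tau2: "preserves_density tau2 f2"
  unfolding preserves_density_def
proof (intro ballI impI)
  fix A :: "real set" assume A[measurable]: "A \<in> sets borel" and sub: "A \<subseteq> {0..1}"
  have "(\<integral>\<^sup>+x\<in>(tau2 -` A \<inter> {0..1}). ennreal (f2 x) \<partial>lborel)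
     = (\<integral>\<^sup>+x. ennreal (2/3 * indicator {0..1/6} x * indicator A (3*x+0)
        + 2/3 * indicator {1/6..1/2} x * indicator A ((3/2)*x+(1/4))
        + 4/3 * indicator {1/2..5/6} x * indicator A ((-3/2)*x+(7/4))
        + 4/3 * indicator {5/6..1} x * indicator A ((-3)*x+3)) \<partial>lborel)"
  proof (intro nn_integral_cong_AE)
    show "AE x in lborel. ennreal (f2 x) * indicator (tau2 -` A \<inter> {0..1}) x = ennreal (2/3 * indicator {0..1/6} x * indicator A (3*x+0)
        + 2/3 * indicator {1/6..1/2} x * indicator A ((3/2)*x+(1/4))
        + 4/3 * indicator {1/2..5/6} x * indicator A ((-3/2)*x+(7/4))
        + 4/3 * indicator {5/6..1} x * indicator A ((-3)*x+3))"
      using AE3[of "1/6" "1/2" "5/6"]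
    proof eventually_elim
      case (elim x)
      have "x < 0 \<or> (0 \<le> x \<and> x < 1/6) \<or> (1/6 < x \<and> x < 1/2) \<or> (1/2 < x \<and> x < 5/6) \<or> (5/6 < x \<and> x \<le> 1) \<or> 1 < x"
        using elim by linarith
      then show ?case by (elim disjE) (simp_all add: f2_def tau2_def indicator_def)
    qed
  qed
  also have "\<dots> = (\<integral>\<^sup>+x. ennreal (2/3 * indicator {0..1/6} x * indicator A (3*x+0)) \<partial>lborel) + (\<integral>\<^sup>+x. ennreal (2/3 * indicator {1/6..1/2} x * indicator A ((3/2)*x+(1/4))) \<partial>lborel) + (\<integral>\<^sup>+x. ennreal (4/3 * indicator {1/2..5/6} x * indicator A ((-3/2)*x+(7/4))) \<partial>lborel) + (\<integral>\<^sup>+x. ennreal (4/3 * indicator {5/6..1} x * indicator A ((-3)*x+3)) \<partial>lborel)"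
    by (rule nn4) auto
  also have "\<dots> = (\<integral>\<^sup>+x. ennreal (2/3/\<bar>3\<bar> * indicator {0..1/2} x * indicator A x) \<partial>lborel) + (\<integral>\<^sup>+x. ennreal (2/3/\<bar>(3/2)\<bar> * indicator {1/2..1} x * indicator A x) \<partial>lborel) + (\<integral>\<^sup>+x. ennreal (4/3/\<bar>(-3/2)\<bar> * indicator {1/2..1} x * indicator A x) \<partial>lborel) + (\<integral>\<^sup>+x. ennreal (4/3/\<bar>(-3)\<bar> * indicator {0..1/2} x * indicator A x) \<partial>lborel)"
  proof -
    have b0: "(\<integral>\<^sup>+x. ennreal (2/3 * indicator {0..1/6} x * indicator A (3*x+0)) \<partial>lborel) = (\<integral>\<^sup>+x. ennreal (2/3/\<bar>3\<bar> * indicator {0..1/2} x * indicator A x) \<partial>lborel)"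
      by (rule branch[OF A]) (auto simp: field_simps)
    have b1: "(\<integral>\<^sup>+x. ennreal (2/3 * indicator {1/6..1/2} x * indicator A ((3/2)*x+(1/4))) \<partial>lborel) = (\<integral>\<^sup>+x. ennreal (2/3/\<bar>(3/2)\<bar> * indicator {1/2..1} x * indicator A x) \<partial>lborel)"
      by (rule branch[OF A]) (auto simp: field_simps)
    have b2: "(\<integral>\<^sup>+x. ennreal (4/3 * indicator {1/2..5/6} x * indicator A ((-3/2)*x+(7/4))) \<partial>lborel) = (\<integral>\<^sup>+x. ennreal (4/3/\<bar>(-3/2)\<bar> * indicator {1/2..1} x * indicator A x) \<partial>lborel)"
      by (rule branch[OF A]) (auto simp: field_simps)
    have b3: "(\<integral>\<^sup>+x. ennreal (4/3 * indicator {5/6..1} x * indicator A ((-3)*x+3)) \<partial>lborel) = (\<integral>\<^sup>+x. ennreal (4/3/\<bar>(-3)\<bar> * indicator {0..1/2} x * indicator A x) \<partial>lborel)"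
      by (rule branch[OF A]) (auto simp: field_simps)
    show ?thesis by (simp only: b0 b1 b2 b3)
  qed
  also have "\<dots> = (\<integral>\<^sup>+x. ennreal (2/3/\<bar>3\<bar> * indicator {0..1/2} x * indicator A x
        + 2/3/\<bar>(3/2)\<bar> * indicator {1/2..1} x * indicator A x
        + 4/3/\<bar>(-3/2)\<bar> * indicator {1/2..1} x * indicator A x
        + 4/3/\<bar>(-3)\<bar> * indicator {0..1/2} x * indicator A x) \<partial>lborel)"
    by (rule nn4[symmetric]) auto
  also have "\<dots> = (\<integral>\<^sup>+x\<in>A. ennreal (f2 x) \<partial>lborel)"
  proof (intro nn_integral_cong_AE)
    show "AE x in lborel. ennreal (2/3/\<bar>3\<bar> * indicator {0..1/2} x * indicator A x
        + 2/3/\<bar>(3/2)\<bar> * indicator {1/2..1} x * indicator A x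
        + 4/3/\<bar>(-3/2)\<bar> * indicator {1/2..1} x * indicator A x
        + 4/3/\<bar>(-3)\<bar> * indicator {0..1/2} x * indicator A x) = ennreal (f2 x) * indicator A x"
      using AE3[of "1/2" "1/2" "1/2"]
    proof eventually_elim
      case (elim x)
      then show ?case using sub by (auto simp: indicator_def f2_def tau2_def)
    qed
  qed
  finally show "(\<integral>\<^sup>+x\<in>(tau2 -` A \<inter> {0..1}). ennreal (f2 x) \<partial>lborel) = (\<integral>\<^sup>+x\<in>A. ennreal (f2 x) \<partial>lborel)" .
qed

lemma pres_tau: "preserves_density tau (\<lambda>_. 1)"
  unfolding preserves_density_def
proof (intro ballI impI)
  fix A :: "real set" assume A[measurable]: "A \<in> sets borel" and sub: "A \<subseteq> {0..1}"
  have "(\<integral>\<^sup>+x\<in>(tau -` A \<inter> {0..1}). ennreal 1 \<partial>lborel)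
     = (\<integral>\<^sup>+x. ennreal (1 * indicator {0..1/6} x * indicator A (3*x+0)
        + 1 * indicator {1/6..1/2} x * indicator A ((3/2)*x+(1/4))
        + 1 * indicator {1/2..2/3} x * indicator A ((-3)*x+(5/2))
        + 1 * indicator {2/3..1} x * indicator A ((-3/2)*x+(3/2))) \<partial>lborel)"
  proof (intro nn_integral_cong_AE)
    show "AE x in lborel. ennreal 1 * indicator (tau -` A \<inter> {0..1}) x = ennreal (1 * indicator {0..1/6} x * indicator A (3*x+0)
        + 1 * indicator {1/6..1/2} x * indicator A ((3/2)*x+(1/4))
        + 1 * indicator {1/2..2/3} x * indicator A ((-3)*x+(5/2))
        + 1 * indicator {2/3..1} x * indicator A ((-3/2)*x+(3/2)))"
      using AE3[of "1/6" "1/2" "2/3"]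
    proof eventually_elim
      case (elim x)
      have "x < 0 \<or> (0 \<le> x \<and> x < 1/6) \<or> (1/6 < x \<and> x < 1/2) \<or> (1/2 < x \<and> x < 2/3) \<or> (2/3 < x \<and> x \<le> 1) \<or> 1 < x"
        using elim by linarith
      then show ?case by (elim disjE) (simp_all add: tau_def tau2_def indicator_def)
    qed
  qed
  also have "\<dots> = (\<integral>\<^sup>+x. ennreal (1 * indicator {0..1/6} x * indicator A (3*x+0)) \<partial>lborel) + (\<integral>\<^sup>+x. ennreal (1 * indicator {1/6..1/2} x * indicator A ((3/2)*x+(1/4))) \<partial>lborel) + (\<integral>\<^sup>+x. ennreal (1 * indicator {1/2..2/3} x * indicator A ((-3)*x+(5/2))) \<partial>lborel) + (\<integral>\<^sup>+x. ennreal (1 * indicator {2/3..1} x * indicator A ((-3/2)*x+(3/2))) \<partial>lborel)"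
    by (rule nn4) auto
  also have "\<dots> = (\<integral>\<^sup>+x. ennreal (1/\<bar>3\<bar> * indicator {0..1/2} x * indicator A x) \<partial>lborel) + (\<integral>\<^sup>+x. ennreal (1/\<bar>(3/2)\<bar> * indicator {1/2..1} x * indicator A x) \<partial>lborel) + (\<integral>\<^sup>+x. ennreal (1/\<bar>(-3)\<bar> * indicator {1/2..1} x * indicator A x) \<partial>lborel) + (\<integral>\<^sup>+x. ennreal (1/\<bar>(-3/2)\<bar> * indicator {0..1/2} x * indicator A x) \<partial>lborel)"
  proof -
    have b0: "(\<integral>\<^sup>+x. ennreal (1 * indicator {0..1/6} x * indicator A (3*x+0)) \<partial>lborel) = (\<integral>\<^sup>+x. ennreal (1/\<bar>3\<bar> * indicator {0..1/2} x * indicator A x) \<partial>lborel)"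
      by (rule branch[OF A]) (auto simp: field_simps)
    have b1: "(\<integral>\<^sup>+x. ennreal (1 * indicator {1/6..1/2} x * indicator A ((3/2)*x+(1/4))) \<partial>lborel) = (\<integral>\<^sup>+x. ennreal (1/\<bar>(3/2)\<bar> * indicator {1/2..1} x * indicator A x) \<partial>lborel)"
      by (rule branch[OF A]) (auto simp: field_simps)
    have b2: "(\<integral>\<^sup>+x. ennreal (1 * indicator {1/2..2/3} x * indicator A ((-3)*x+(5/2))) \<partial>lborel) = (\<integral>\<^sup>+x. ennreal (1/\<bar>(-3)\<bar> * indicator {1/2..1} x * indicator A x) \<partial>lborel)"
      by (rule branch[OF A]) (auto simp: field_simps)
    have b3: "(\<integral>\<^sup>+x. ennreal (1 * indicator {2/3..1} x * indicator A ((-3/2)*x+(3/2))) \<partial>lborel) = (\<integral>\<^sup>+x. ennreal (1/\<bar>(-3/2)\<bar> * indicator {0..1/2} x * indicator A x) \<partial>lborel)"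
      by (rule branch[OF A]) (auto simp: field_simps)
    show ?thesis by (simp only: b0 b1 b2 b3)
  qed
  also have "\<dots> = (\<integral>\<^sup>+x. ennreal (1/\<bar>3\<bar> * indicator {0..1/2} x * indicator A x
        + 1/\<bar>(3/2)\<bar> * indicator {1/2..1} x * indicator A x
        + 1/\<bar>(-3)\<bar> * indicator {1/2..1} x * indicator A x
        + 1/\<bar>(-3/2)\<bar> * indicator {0..1/2} x * indicator A x) \<partial>lborel)"
    by (rule nn4[symmetric]) auto
  also have "\<dots> = (\<integral>\<^sup>+x\<in>A. ennreal 1 \<partial>lborel)"
  proof (intro nn_integral_cong_AE)
    show "AE x in lborel. ennreal (1/\<bar>3\<bar> * indicator {0..1/2} x * indicator A x
        + 1/\<bar>(3/2)\<bar> * indicator {1/2..1} x * indicator A x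
        + 1/\<bar>(-3)\<bar> * indicator {1/2..1} x * indicator A x
        + 1/\<bar>(-3/2)\<bar> * indicator {0..1/2} x * indicator A x) = ennreal 1 * indicator A x"
      using AE3[of "1/2" "1/2" "1/2"]
    proof eventually_elim
      case (elim x)
      then show ?case using sub by (auto simp: indicator_def tau_def tau2_def)
    qed
  qed
  finally show "(\<integral>\<^sup>+x\<in>(tau -` A \<inter> {0..1}). ennreal 1 \<partial>lborel) = (\<integral>\<^sup>+x\<in>A. ennreal 1 \<partial>lborel)" .
qed



lemma branchW:
  fixes m q a b lo hi :: real and w :: "real \<Rightarrow> real"
  assumes [measurable]: "A \<in> sets borel" "w \<in> borel_measurable borel" and w: "\<And>x. w x \<ge> 0" and m: "m \<noteq> 0"
    and img: "\<And>y. ((y-q)/m \<in> {a..b}) = (y \<in> {lo..hi})"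
  shows "(\<integral>\<^sup>+x. ennreal (w x * indicator {a..b} x * indicator A (m*x+q)) \<partial>lborel)
       = (\<integral>\<^sup>+y. ennreal (1/\<bar>m\<bar> * w ((y-q)/m) * indicator {lo..hi} y * indicator A y) \<partial>lborel)"
proof -
  have "(\<integral>\<^sup>+x. ennreal (w x * indicator {a..b} x * indicator A (m*x+q)) \<partial>lborel)
     = (\<integral>\<^sup>+x. ennreal (w x * indicator {a..b} x) * indicator A (m*x+q) \<partial>lborel)"
    by (intro nn_integral_cong) (auto simp: indicator_def)
  also have "\<dots> = ennreal (1/\<bar>m\<bar>) * (\<integral>\<^sup>+y. ennreal (w ((y-q)/m) * indicator {a..b} ((y-q)/m)) * indicator A y \<partial>lborel)"
    by (rule subst_aff) (use m in auto)
  also have "\<dots> = (\<integral>\<^sup>+y. ennreal (1/\<bar>m\<bar>) * (ennreal (w ((y-q)/m) * indicator {a..b} ((y-q)/m)) * indicator A y) \<partial>lborel)"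
    by (rule nn_integral_cmult[symmetric]) auto
  also have "\<dots> = (\<integral>\<^sup>+y. ennreal (1/\<bar>m\<bar> * w ((y-q)/m) * indicator {lo..hi} y * indicator A y) \<partial>lborel)"
  proof (intro nn_integral_cong)
    fix y
    show "ennreal (1/\<bar>m\<bar>) * (ennreal (w ((y-q)/m) * indicator {a..b} ((y-q)/m)) * indicator A y)
        = ennreal (1/\<bar>m\<bar> * w ((y-q)/m) * indicator {lo..hi} y * indicator A y)"
      using img[of y] w[of "(y-q)/m"] by (auto simp: indicator_def ennreal_mult[symmetric])
  qed
  finally show ?thesis .
qed

lemma no_sel:
  assumes meas: "\<eta> \<in> borel_measurable (restrict_space borel {0..1})"
    and sel: "\<forall>x\<in>{0..1}. \<eta> x \<in> {tau1 x, tau2 x}"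
    and pres: "preserves_density \<eta> (\<lambda>_. 1)"
  shows False
proof -
  have [measurable]: "tau2 \<in> borel_measurable borel" unfolding tau2_def by measurable
  define S where "S = {x\<in>{0..1}. \<eta> x = tau2 x}"
  have "{x \<in> space (restrict_space borel {0..1}). \<eta> x = tau2 x} \<in> sets (restrict_space borel {0..1})"
    by (rule measurable_equality_set[OF meas measurable_restrict_space1]) measurable
  then have S[measurable]: "S \<in> sets borel"
    by (simp add: S_def sets_restrict_space_iff space_restrict_space)
  define s where "s = (indicator S :: real \<Rightarrow> real)"
  have s[measurable]: "s \<in> borel_measurable borel" unfolding s_def by measurable
  have eta: "\<And>x. x\<in>{0..1} \<Longrightarrow> \<eta> x = (if x \<in> S then tau2 x else tau1 x)"
    using sel by (auto simp: S_def)
  define P where "P y = 1/\<bar>3/2\<bar> * s ((y-1/4)/(3/2)) + 1/\<bar>-3/2\<bar> * s ((y-7/4)/(-3/2))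
      + 1/\<bar>4\<bar> * (1 - s ((y-(-1))/4)) + 1/\<bar>-4\<bar> * (1 - s ((y-3)/(-4)))" for y
  have Pm[measurable]: "P \<in> borel_measurable borel" unfolding P_def by measurable
  have Pnn: "P y \<ge> 0" for y unfolding P_def s_def by (auto simp: indicator_def)
  have Pne: "P y \<noteq> 1" for y unfolding P_def s_def by (auto simp: indicator_def)
  have key: "(\<integral>\<^sup>+y. ennreal (indicator A y) \<partial>lborel) = (\<integral>\<^sup>+y. ennreal (P y * indicator A y) \<partial>lborel)"
    if A[measurable]: "A \<in> sets borel" and sub: "A \<subseteq> {1/2<..<1}" for A
  proof -
    have nA1: "y \<notin> A" if "y \<le> 1/2" for y using sub that by auto
    have nA2: "y \<notin> A" if "y \<ge> 1" for y using sub that by auto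
    have A01: "A \<subseteq> {0..1}" using sub by auto
    have "(\<integral>\<^sup>+x\<in>(\<eta> -` A \<inter> {0..1}). ennreal 1 \<partial>lborel) = (\<integral>\<^sup>+x\<in>A. ennreal 1 \<partial>lborel)"
      using pres[unfolded preserves_density_def, rule_format, OF A A01] .
    then have "(\<integral>\<^sup>+y. ennreal (indicator A y) \<partial>lborel) = (\<integral>\<^sup>+x. ennreal (indicator (\<eta> -` A \<inter> {0..1}) x) \<partial>lborel)"
      by (simp only: ennreal_1 mult_1 ennreal_indicator)
    also have "\<dots> = (\<integral>\<^sup>+x. ennreal (s x * indicator {1/6..1/2} x * indicator A ((3/2)*x+(1/4))
        + s x * indicator {1/2..5/6} x * indicator A ((-3/2)*x+(7/4))
        + (1 - s x) * indicator {3/8..1/2} x * indicator A (4*x+(-1))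
        + (1 - s x) * indicator {1/2..5/8} x * indicator A ((-4)*x+3)) \<partial>lborel)"
    proof (intro nn_integral_cong_AE)
      show "AE x in lborel. ennreal (indicator (\<eta> -` A \<inter> {0..1}) x) = ennreal (s x * indicator {1/6..1/2} x * indicator A ((3/2)*x+(1/4))
        + s x * indicator {1/2..5/6} x * indicator A ((-3/2)*x+(7/4))
        + (1 - s x) * indicator {3/8..1/2} x * indicator A (4*x+(-1))
        + (1 - s x) * indicator {1/2..5/8} x * indicator A ((-4)*x+3))"
        using AE3[of "1/6" "3/8" "1/2"] AE3[of "5/8" "5/6" "5/6"]
      proof eventually_elim
        case (elim x)
        have ind: "indicator (\<eta> -` A \<inter> {0..1}) x = (indicator {0..1} x :: real) * indicator A (\<eta> x)"
          by (auto simp: indicator_def)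
        have "x < 0 \<or> (0 \<le> x \<and> x < 1/6) \<or> (1/6 < x \<and> x < 3/8) \<or> (3/8 < x \<and> x < 1/2) \<or> (1/2 < x \<and> x < 5/8) \<or> (5/8 < x \<and> x < 5/6) \<or> (5/6 < x \<and> x \<le> 1) \<or> 1 < x"
          using elim by linarith
        then show ?case
        proof (elim disjE)
          assume "x < 0" then show ?thesis by (simp add: indicator_def s_def S_def)
        next
          assume "1 < x" then show ?thesis by (simp add: indicator_def s_def S_def)
        qed (cases "x \<in> S"; simp add: ind eta s_def indicator_simps tau1_def tau2_def nA1 nA2)+
      qed
    qed
    also have "\<dots> = (\<integral>\<^sup>+x. ennreal (s x * indicator {1/6..1/2} x * indicator A ((3/2)*x+(1/4))) \<partial>lborel) + (\<integral>\<^sup>+x. ennreal (s x * indicator {1/2..5/6} x * indicator A ((-3/2)*x+(7/4))) \<partial>lborel) + (\<integral>\<^sup>+x. ennreal ((1 - s x) * indicator {3/8..1/2} x * indicator A (4*x+(-1))) \<partial>lborel) + (\<integral>\<^sup>+x. ennreal ((1 - s x) * indicator {1/2..5/8} x * indicator A ((-4)*x+3)) \<partial>lborel)"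
      by (rule nn4) (auto simp: s_def indicator_def)
    also have "\<dots> = (\<integral>\<^sup>+y. ennreal (1/\<bar>(3/2)\<bar> * s ((y-(1/4))/(3/2)) * indicator {1/2..1} y * indicator A y) \<partial>lborel) + (\<integral>\<^sup>+y. ennreal (1/\<bar>(-3/2)\<bar> * s ((y-(7/4))/(-3/2)) * indicator {1/2..1} y * indicator A y) \<partial>lborel) + (\<integral>\<^sup>+y. ennreal (1/\<bar>4\<bar> * (1 - s ((y-(-1))/4)) * indicator {1/2..1} y * indicator A y) \<partial>lborel) + (\<integral>\<^sup>+y. ennreal (1/\<bar>(-4)\<bar> * (1 - s ((y-3)/(-4))) * indicator {1/2..1} y * indicator A y) \<partial>lborel)"
    proof -
      have b0: "(\<integral>\<^sup>+x. ennreal (s x * indicator {1/6..1/2} x * indicator A ((3/2)*x+(1/4))) \<partial>lborel) = (\<integral>\<^sup>+y. ennreal (1/\<bar>(3/2)\<bar> * s ((y-(1/4))/(3/2)) * indicator {1/2..1} y * indicator A y) \<partial>lborel)"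
        by (rule branchW[OF A]) (auto simp: field_simps s_def indicator_def)
      have b1: "(\<integral>\<^sup>+x. ennreal (s x * indicator {1/2..5/6} x * indicator A ((-3/2)*x+(7/4))) \<partial>lborel) = (\<integral>\<^sup>+y. ennreal (1/\<bar>(-3/2)\<bar> * s ((y-(7/4))/(-3/2)) * indicator {1/2..1} y * indicator A y) \<partial>lborel)"
        by (rule branchW[OF A]) (auto simp: field_simps s_def indicator_def)
      have b2: "(\<integral>\<^sup>+x. ennreal ((1 - s x) * indicator {3/8..1/2} x * indicator A (4*x+(-1))) \<partial>lborel) = (\<integral>\<^sup>+y. ennreal (1/\<bar>4\<bar> * (1 - s ((y-(-1))/4)) * indicator {1/2..1} y * indicator A y) \<partial>lborel)"
        by (rule branchW[OF A]) (auto simp: field_simps s_def indicator_def)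
      have b3: "(\<integral>\<^sup>+x. ennreal ((1 - s x) * indicator {1/2..5/8} x * indicator A ((-4)*x+3)) \<partial>lborel) = (\<integral>\<^sup>+y. ennreal (1/\<bar>(-4)\<bar> * (1 - s ((y-3)/(-4))) * indicator {1/2..1} y * indicator A y) \<partial>lborel)"
        by (rule branchW[OF A]) (auto simp: field_simps s_def indicator_def)
      show ?thesis by (simp only: b0 b1 b2 b3)
    qed
    also have "\<dots> = (\<integral>\<^sup>+y. ennreal (1/\<bar>(3/2)\<bar> * s ((y-(1/4))/(3/2)) * indicator {1/2..1} y * indicator A y
        + 1/\<bar>(-3/2)\<bar> * s ((y-(7/4))/(-3/2)) * indicator {1/2..1} y * indicator A y
        + 1/\<bar>4\<bar> * (1 - s ((y-(-1))/4)) * indicator {1/2..1} y * indicator A y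
        + 1/\<bar>(-4)\<bar> * (1 - s ((y-3)/(-4))) * indicator {1/2..1} y * indicator A y) \<partial>lborel)"
      by (rule nn4[symmetric]) (auto simp: s_def indicator_def)
    also have "\<dots> = (\<integral>\<^sup>+y. ennreal (P y * indicator A y) \<partial>lborel)"
    proof (intro nn_integral_cong)
      fix y
      show "ennreal (1/\<bar>(3/2)\<bar> * s ((y-(1/4))/(3/2)) * indicator {1/2..1} y * indicator A y
        + 1/\<bar>(-3/2)\<bar> * s ((y-(7/4))/(-3/2)) * indicator {1/2..1} y * indicator A y
        + 1/\<bar>4\<bar> * (1 - s ((y-(-1))/4)) * indicator {1/2..1} y * indicator A y
        + 1/\<bar>(-4)\<bar> * (1 - s ((y-3)/(-4))) * indicator {1/2..1} y * indicator A y) = ennreal (P y * indicator A y)"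
      proof (cases "y \<in> A")
        case True
        then have "indicator {1/2..1} y = (1::real)" using sub by (auto simp: indicator_def)
        then show ?thesis using True by (simp only: P_def indicator_simps mult_1_right)
      next
        case False
        then show ?thesis by simp
      qed
    qed
    finally show ?thesis .
  qed
  define I where "I = {1/2<..<(1::real)}"
  have I[measurable]: "I \<in> sets borel" unfolding I_def by simp
  define E1 where "E1 = {y\<in>I. P y > 1}"
  define E2 where "E2 = {y\<in>I. P y < 1}"
  have E1[measurable]: "E1 \<in> sets borel" unfolding E1_def by measurable
  have E2[measurable]: "E2 \<in> sets borel" unfolding E2_def by measurable
  have sub1: "E1 \<subseteq> {1/2<..<1}" "E2 \<subseteq> {1/2<..<1}" unfolding E1_def E2_def I_def by auto
  have fin: "(\<integral>\<^sup>+y. ennreal (indicator E y) \<partial>lborel) \<noteq> \<infinity>" if "E \<in> sets borel" "E \<subseteq> I" for E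
  proof -
    have "(\<integral>\<^sup>+y. ennreal (indicator E y) \<partial>lborel) = emeasure lborel E"
      using that by (simp add: ennreal_indicator)
    also have "\<dots> \<le> emeasure lborel I" using that by (intro emeasure_mono) auto
    also have "\<dots> = ennreal (1/2)" unfolding I_def by simp
    finally show ?thesis by (auto simp: top_unique)
  qed
  have AE1: "AE y in lborel. y \<notin> E1"
  proof (rule ccontr)
    assume na: "\<not> (AE y in lborel. y \<notin> E1)"
    have "(\<integral>\<^sup>+y. ennreal (indicator E1 y) \<partial>lborel) < (\<integral>\<^sup>+y. ennreal (P y * indicator E1 y) \<partial>lborel)"
    proof (rule nn_integral_less)
      show "(\<integral>\<^sup>+y. ennreal (indicator E1 y) \<partial>lborel) \<noteq> \<infinity>" by (rule fin) (auto simp: E1_def)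
      show "AE x in lborel. ennreal (indicator E1 x) \<le> ennreal (P x * indicator E1 x)"
        by (auto simp: indicator_def E1_def)
      show "\<not> (AE x in lborel. ennreal (P x * indicator E1 x) \<le> ennreal (indicator E1 x))"
      proof
        assume "AE x in lborel. ennreal (P x * indicator E1 x) \<le> ennreal (indicator E1 x)"
        then have "AE y in lborel. y \<notin> E1"
          by eventually_elim (auto simp: indicator_def E1_def)
        with na show False by simp
      qed
    qed auto
    with key[OF E1 sub1(1)] show False by simp
  qed
  have AE2: "AE y in lborel. y \<notin> E2"
  proof (rule ccontr)
    assume na: "\<not> (AE y in lborel. y \<notin> E2)"
    have "(\<integral>\<^sup>+y. ennreal (P y * indicator E2 y) \<partial>lborel) < (\<integral>\<^sup>+y. ennreal (indicator E2 y) \<partial>lborel)"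
    proof (rule nn_integral_less)
      show "(\<integral>\<^sup>+y. ennreal (P y * indicator E2 y) \<partial>lborel) \<noteq> \<infinity>"
        using fin[OF E2] key[OF E2 sub1(2)] sub1(2) by (simp add: I_def)
      show "AE x in lborel. ennreal (P x * indicator E2 x) \<le> ennreal (indicator E2 x)"
        by (auto simp: indicator_def E2_def)
      show "\<not> (AE x in lborel. ennreal (indicator E2 x) \<le> ennreal (P x * indicator E2 x))"
      proof
        assume "AE x in lborel. ennreal (indicator E2 x) \<le> ennreal (P x * indicator E2 x)"
        then have "AE y in lborel. y \<notin> E2"
          by eventually_elim (auto simp: indicator_def E2_def ennreal_le_iff2 Pnn)
        with na show False by simp
      qed
    qed auto
    with key[OF E2 sub1(2)] show False by simp
  qed
  have "AE y in lborel. y \<notin> I"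
    using AE1 AE2
  proof eventually_elim
    case (elim y)
    show ?case
    proof
      assume "y \<in> I"
      moreover have "P y < 1 \<or> P y > 1" using Pne[of y] by linarith
      ultimately show False using elim by (auto simp: E1_def E2_def)
    qed
  qed
  then have "emeasure lborel I = 0"
    using AE_iff_measurable[of I lborel "\<lambda>y. y \<notin> I"] I by simp
  then show False unfolding I_def by simp
qed


theorem mainTheorem5:
  shows "preserves_density tau1 f1
       \<and> preserves_density tau2 f2
       \<and> (AE x in lborel. x \<in> {0..1} \<longrightarrow> 2/5 * f1 x + 3/5 * f2 x = 1)
       \<and> \<not> (\<exists>\<eta>. \<eta> \<in> borel_measurable (restrict_space borel {0..1})
               \<and> (\<forall>x \<in> {0..1}. \<eta> x \<in> {tau1 x, tau2 x})
               \<and> preserves_density \<eta> (\<lambda>_. 1))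
       \<and> (\<forall>x \<in> {0..1}. tau1 x \<le> tau x \<and> tau x \<le> tau2 x)
       \<and> preserves_density tau (\<lambda>_. 1)"
proof -
  have ae: "AE x in lborel. x \<in> {0..1} \<longrightarrow> 2/5 * f1 x + 3/5 * f2 x = 1"
    using AE_lborel_singleton[of "1/2::real"] by eventually_elim (auto simp: f1_def f2_def indicator_def)
  have ineq: "\<forall>x\<in>{0..1}. tau1 x \<le> tau x \<and> tau x \<le> tau2 x"
    by (auto simp: tau1_def tau_def tau2_def)
  have ns: "\<not> (\<exists>\<eta>. \<eta> \<in> borel_measurable (restrict_space borel {0..1})
               \<and> (\<forall>x \<in> {0..1}. \<eta> x \<in> {tau1 x, tau2 x})
               \<and> preserves_density \<eta> (\<lambda>_. 1))"
    using no_sel by blast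
  show ?thesis using pres_tau1 pres_tau2 pres_tau ae ineq ns by blast
qed

end
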